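(* Every real planar quadratic differential system having a finite semi-elemental double saddle-node $\overline{sn}_{(2)}$ and an infinite saddle-node of type $\overline{\binom{0}{2}}SN$ located at the point at infinity in the direction defined by the eigenvector of the saddle-node with null eigenvalue can be brought, via an affine change of coordinates and a time rescaling, to the normal form $$\dot x = x^2+2hxy+ky^2,\qquad \dot y = y+xy+ny^2,$$ where $h,k,n$ are real parameters.
   Context: A singular point $r$ of a planar vector field $X$ is semi-elemental if $\det DX(r)=0$ but $\operatorname{tr} DX(r)\neq 0$. A finite double saddle-node $\overline{sn}_{(2)}$ is a semi-elemental finite singular point of multiplicity two whose neighborhood consists of two hyperbolic sectors and one parabolic sector. Infinite singular points are those of the Poincaré compactification on the line at infinity; e.g. in the chart $x=1/z$, $y=u/z$ the line at infinity is $z=0$ and the point at infinity in the direction of the $x$-axis is $(u,z)=(0,0)$. An infinite singular point is a saddle-node of type $\overline{\binom{0}{2}}SN$ if it is a semi-elemental saddle-node of multiplicity two on the line at infinity, formed by the collision of an infinite saddle with an infinite node, i.e. its eigendirection with zero eigenvalue is the line at infinity. *)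

theory Defs
  imports "HOL-Analysis.Analysis"
begin

record qpoly =
  c00 :: real
  c10 :: real
  c01 :: real
  c20 :: real
  c11 :: real
  c02 :: real

definition qev :: "qpoly \<Rightarrow> 'a::real_field \<Rightarrow> 'a \<Rightarrow> 'a" where
  "qev p x y = of_real (c00 p) + of_real (c10 p) * x + of_real (c01 p) * y
     + of_real (c20 p) * x^2 + of_real (c11 p) * x * y + of_real (c02 p) * y^2"

text \<open>Homogenization: z^2 p(x/z, y/z).\<close>
definition qhom :: "qpoly \<Rightarrow> 'a::real_field \<Rightarrow> 'a \<Rightarrow> 'a \<Rightarrow> 'a" where
  "qhom p x y z = of_real (c20 p) * x^2 + of_real (c11 p) * x * y + of_real (c02 p) * y^2
     + z * (of_real (c10 p) * x + of_real (c01 p) * y) + z^2 * of_real (c00 p)"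

definition is_quadratic :: "qpoly \<Rightarrow> qpoly \<Rightarrow> bool" where
  "is_quadratic P Q \<longleftrightarrow>
     (c20 P, c11 P, c02 P, c20 Q, c11 Q, c02 Q) \<noteq> (0, 0, 0, 0, 0, 0)"

definition d1 :: "(real \<Rightarrow> real \<Rightarrow> real) \<Rightarrow> real \<Rightarrow> real \<Rightarrow> real" where
  "d1 f a b = deriv (\<lambda>x. f x b) a"
definition d2 :: "(real \<Rightarrow> real \<Rightarrow> real) \<Rightarrow> real \<Rightarrow> real \<Rightarrow> real" where
  "d2 f a b = deriv (\<lambda>y. f a y) b"

definition jac_det :: "(real \<Rightarrow> real \<Rightarrow> real) \<Rightarrow> (real \<Rightarrow> real \<Rightarrow> real) \<Rightarrow> real \<Rightarrow> real \<Rightarrow> real" where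
  "jac_det f g a b = d1 f a b * d2 g a b - d2 f a b * d1 g a b"
definition jac_tr :: "(real \<Rightarrow> real \<Rightarrow> real) \<Rightarrow> (real \<Rightarrow> real \<Rightarrow> real) \<Rightarrow> real \<Rightarrow> real \<Rightarrow> real" where
  "jac_tr f g a b = d1 f a b + d2 g a b"

definition semi_elemental :: "(real \<Rightarrow> real \<Rightarrow> real) \<Rightarrow> (real \<Rightarrow> real \<Rightarrow> real) \<Rightarrow> real \<Rightarrow> real \<Rightarrow> bool" where
  "semi_elemental f g a b \<longleftrightarrow> f a b = 0 \<and> g a b = 0 \<and> jac_det f g a b = 0 \<and> jac_tr f g a b \<noteq> 0"

text \<open>Multiplicity of an isolated zero r of a (holomorphic, polynomial) map F
  on the complexification: the local degree, i.e. r is the only zero of F in a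
  closed ball, all nearby values have at most m preimages in the ball, and values
  with exactly m preimages occur arbitrarily close to 0 (generic values).
  For polynomial maps C^2 -> C^2 this is the intersection multiplicity.\<close>
definition zero_mult :: "('a::real_normed_vector \<Rightarrow> 'a) \<Rightarrow> 'a \<Rightarrow> nat \<Rightarrow> bool" where
  "zero_mult F r m \<longleftrightarrow>
     (\<exists>\<delta>>0. {z \<in> cball r \<delta>. F z = 0} = {r} \<and>
        (\<exists>\<eta>>0. \<forall>c. norm c < \<eta> \<longrightarrow>
            finite {z \<in> ball r \<delta>. F z = c} \<and> card {z \<in> ball r \<delta>. F z = c} \<le> m) \<and>
        (\<forall>\<epsilon>>0. \<exists>c. norm c < \<epsilon> \<and>
            finite {z \<in> ball r \<delta>. F z = c} \<and> card {z \<in> ball r \<delta>. F z = c} = m))"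

text \<open>Finite semi-elemental singular point of multiplicity two (a semi-elemental
  point of even multiplicity 2 is a saddle-node: two hyperbolic sectors and one
  parabolic sector).\<close>
definition finite_double_saddle_node :: "qpoly \<Rightarrow> qpoly \<Rightarrow> real \<Rightarrow> real \<Rightarrow> bool" where
  "finite_double_saddle_node P Q r1 r2 \<longleftrightarrow>
     semi_elemental (\<lambda>x y. qev P x y) (\<lambda>x y. qev Q x y) r1 r2 \<and>
     zero_mult (\<lambda>(x::complex, y::complex). (qev P x y, qev Q x y))
               (complex_of_real r1, complex_of_real r2) 2"

text \<open>Poincare compactification, local chart at the point at infinity in the
  direction of v = (v1,v2) \<noteq> 0.  We rotate-scale coordinates by
  R = [[v1,-v2],[v2,v1]] (so R e1 = v), take the field adj(R) X(R w), and use the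
  chart x = 1/z, y = u/z, multiplied by z^2 (degree two):
  u' = Q~(1,u,z) - u P~(1,u,z),  z' = - z P~(1,u,z), with ~ the homogenization.
  The line at infinity is z = 0 and the point in direction v is (u,z) = (0,0).\<close>
definition chart_P :: "qpoly \<Rightarrow> qpoly \<Rightarrow> real \<Rightarrow> real \<Rightarrow> 'a::real_field \<Rightarrow> 'a \<Rightarrow> 'a" where
  "chart_P P Q v1 v2 u z =
     (let xi = of_real v1 - of_real v2 * u; eta = of_real v2 + of_real v1 * u
      in of_real v1 * qhom P xi eta z + of_real v2 * qhom Q xi eta z)"
definition chart_Q :: "qpoly \<Rightarrow> qpoly \<Rightarrow> real \<Rightarrow> real \<Rightarrow> 'a::real_field \<Rightarrow> 'a \<Rightarrow> 'a" where
  "chart_Q P Q v1 v2 u z =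
     (let xi = of_real v1 - of_real v2 * u; eta = of_real v2 + of_real v1 * u
      in - of_real v2 * qhom P xi eta z + of_real v1 * qhom Q xi eta z)"

definition chart_U :: "qpoly \<Rightarrow> qpoly \<Rightarrow> real \<Rightarrow> real \<Rightarrow> 'a::real_field \<Rightarrow> 'a \<Rightarrow> 'a" where
  "chart_U P Q v1 v2 u z = chart_Q P Q v1 v2 u z - u * chart_P P Q v1 v2 u z"
definition chart_Z :: "qpoly \<Rightarrow> qpoly \<Rightarrow> real \<Rightarrow> real \<Rightarrow> 'a::real_field \<Rightarrow> 'a \<Rightarrow> 'a" where
  "chart_Z P Q v1 v2 u z = - z * chart_P P Q v1 v2 u z"

text \<open>Infinite saddle-node of type overline{(0 2)}SN at the point at infinity in
  direction v: semi-elemental singular point of the chart field of multiplicity two,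
  whose eigendirection with zero eigenvalue is the line at infinity z = 0
  (i.e. the vector (1,0) lies in the kernel of the Jacobian).\<close>
definition infinite_saddle_node_02 :: "qpoly \<Rightarrow> qpoly \<Rightarrow> real \<Rightarrow> real \<Rightarrow> bool" where
  "infinite_saddle_node_02 P Q v1 v2 \<longleftrightarrow>
     (let U = (\<lambda>u z. chart_U P Q v1 v2 (u::real) z); Z = (\<lambda>u z. chart_Z P Q v1 v2 (u::real) z)
      in semi_elemental U Z 0 0 \<and> d1 U 0 0 = 0 \<and> d1 Z 0 0 = 0 \<and>
         zero_mult (\<lambda>(u::complex, z::complex). (chart_U P Q v1 v2 u z, chart_Z P Q v1 v2 u z))
                   (0, 0) 2)"

end

theory Submission
  imports Defs
begin

lemma d1_qev: "d1 (\<lambda>x y. qev P x y) a b = c10 P + 2*c20 P*a + c11 P*b"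
  unfolding d1_def
  by (rule DERIV_imp_deriv) (auto simp: qev_def intro!: derivative_eq_intros simp: algebra_simps)

lemma d2_qev: "d2 (\<lambda>x y. qev P x y) a b = c01 P + c11 P*a + 2*c02 P*b"
  unfolding d2_def qev_def[abs_def] chart_Z_def[abs_def] chart_P_def[abs_def]
  by (rule DERIV_imp_deriv) (auto simp: qev_def intro!: derivative_eq_intros simp: algebra_simps)

lemma U00: "chart_U P Q v1 v2 (0::real) 0 = - v2 * (c20 P* v1^2 + c11 P* v1* v2 + c02 P* v2^2) + v1 * (c20 Q* v1^2 + c11 Q* v1* v2 + c02 Q* v2^2)"
  by (simp add: chart_U_def chart_Q_def chart_P_def qhom_def Let_def)

lemma d2Z: "d2 (\<lambda>u z. chart_Z P Q v1 v2 (u::real) z) 0 0 = - (v1 * (c20 P* v1^2 + c11 P* v1* v2 + c02 P* v2^2) + v2 * (c20 Q* v1^2 + c11 Q* v1* v2 + c02 Q* v2^2))"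
  unfolding d2_def qev_def[abs_def] chart_Z_def[abs_def] chart_P_def[abs_def]
  by (rule DERIV_imp_deriv) (auto simp: chart_Z_def chart_P_def qhom_def Let_def intro!: derivative_eq_intros simp: algebra_simps power2_eq_square)

lemma d1U: "d1 (\<lambda>u z. chart_U P Q v1 v2 (u::real) z) 0 0 =
   - v2 * (-v2*(2*c20 P* v1 + c11 P* v2) + v1*(c11 P* v1 + 2*c02 P* v2))
   + v1 * (-v2*(2*c20 Q* v1 + c11 Q* v2) + v1*(c11 Q* v1 + 2*c02 Q* v2))
   - (v1 * (c20 P* v1^2 + c11 P* v1* v2 + c02 P* v2^2) + v2 * (c20 Q* v1^2 + c11 Q* v1* v2 + c02 Q* v2^2))"
  unfolding d1_def
  by (rule DERIV_imp_deriv) (auto simp: chart_U_def chart_Q_def chart_P_def qhom_def Let_def intro!: derivative_eq_intros simp: algebra_simps power2_eq_square)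

lemma qev_expand: "qev P (a*w1 + b*w2 + e) (c*w1 + d*w2 + f) = qev P e f
   + ((c10 P + 2*c20 P*e + c11 P*f)*a + (c01 P + c11 P*e + 2*c02 P*f)*c)*w1
   + ((c10 P + 2*c20 P*e + c11 P*f)*b + (c01 P + c11 P*e + 2*c02 P*f)*d)*w2
   + (c20 P*a^2 + c11 P*a*c + c02 P*c^2)*w1^2
   + (2*c20 P*a*b + c11 P*(a*d+b*c) + 2*c02 P*c*d)*w1*w2
   + (c20 P*b^2 + c11 P*b*d + c02 P*d^2)*w2^2"
  by (simp add: qev_def power2_eq_square algebra_simps)

theorem proposition2p2:
  fixes P Q :: qpoly and r1 r2 v1 v2 :: real
  assumes quad: "is_quadratic P Q"
    and fin: "finite_double_saddle_node P Q r1 r2"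
    and v_nz: "(v1, v2) \<noteq> (0, 0)"
    and v_ker1: "d1 (\<lambda>x y. qev P x y) r1 r2 * v1 + d2 (\<lambda>x y. qev P x y) r1 r2 * v2 = 0"
    and v_ker2: "d1 (\<lambda>x y. qev Q x y) r1 r2 * v1 + d2 (\<lambda>x y. qev Q x y) r1 r2 * v2 = 0"
    and inf: "infinite_saddle_node_02 P Q v1 v2"
  shows "\<exists>a b c d e f \<mu> h k n :: real. a * d - b * c \<noteq> 0 \<and> \<mu> \<noteq> 0 \<and>
     (\<forall>w1 w2. qev P (a * w1 + b * w2 + e) (c * w1 + d * w2 + f)
                = \<mu> * (a * (w1^2 + 2 * h * w1 * w2 + k * w2^2) + b * (w2 + w1 * w2 + n * w2^2))
            \<and> qev Q (a * w1 + b * w2 + e) (c * w1 + d * w2 + f)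
                = \<mu> * (c * (w1^2 + 2 * h * w1 * w2 + k * w2^2) + d * (w2 + w1 * w2 + n * w2^2)))"
proof -
  define Px where "Px = c10 P + 2*c20 P*r1 + c11 P*r2"
  define Py where "Py = c01 P + c11 P*r1 + 2*c02 P*r2"
  define Qx where "Qx = c10 Q + 2*c20 Q*r1 + c11 Q*r2"
  define Qy where "Qy = c01 Q + c11 Q*r1 + 2*c02 Q*r2"
  define P2v where "P2v = c20 P* v1^2 + c11 P* v1* v2 + c02 P* v2^2"
  define Q2v where "Q2v = c20 Q* v1^2 + c11 Q* v1* v2 + c02 Q* v2^2"
  define K where "K = v1*P2v + v2*Q2v"
  define N where "N = v1^2 + v2^2"
  define lam where "lam = Px + Qy"
  have k1: "Px* v1 + Py* v2 = 0" using v_ker1 by (simp add: d1_qev d2_qev Px_def Py_def)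
  have k2: "Qx* v1 + Qy* v2 = 0" using v_ker2 by (simp add: d1_qev d2_qev Qx_def Qy_def)
  have P0: "qev P r1 r2 = 0" and Q0: "qev Q r1 r2 = 0" and det0: "Px*Qy - Py*Qx = 0" and lam0: "lam \<noteq> 0"
    using fin by (auto simp: finite_double_saddle_node_def semi_elemental_def jac_det_def jac_tr_def
        d1_qev d2_qev Px_def Py_def Qx_def Qy_def lam_def)
  have U0: "- v2 * P2v + v1 * Q2v = 0" and K0: "K \<noteq> 0" and
    H7: "- v2 * (-v2*(2*c20 P* v1 + c11 P* v2) + v1*(c11 P* v1 + 2*c02 P* v2))
   + v1 * (-v2*(2*c20 Q* v1 + c11 Q* v2) + v1*(c11 Q* v1 + 2*c02 Q* v2)) - K = 0"
    using inf by (auto simp: infinite_saddle_node_02_def Let_def semi_elemental_def jac_tr_def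
        U00 d2Z d1U P2v_def Q2v_def K_def)
  have N0: "N \<noteq> 0" using v_nz by (auto simp: N_def sum_power2_eq_zero_iff)
  define al where "al = lam*N/K"
  have al0: "al \<noteq> 0" using lam0 N0 K0 by (simp add: al_def)
  define a where "a = al* v1"
  define c where "c = al* v2"
  define b where "b = Py* v1 - Px* v2"
  define d where "d = Qy* v1 - Qx* v2"
  define detM where "detM = a*d - b*c"
  define SP where "SP = 2*c20 P*a*b + c11 P*(a*d+b*c) + 2*c02 P*c*d"
  define SQ where "SQ = 2*c20 Q*a*b + c11 Q*(a*d+b*c) + 2*c02 Q*c*d"
  define TP where "TP = c20 P*b^2 + c11 P*b*d + c02 P*d^2"
  define TQ where "TQ = c20 Q*b^2 + c11 Q*b*d + c02 Q*d^2"
  define h where "h = (d*SP - b*SQ)/(detM*2*lam)"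
  define k where "k = (d*TP - b*TQ)/(detM*lam)"
  define n where "n = (a*TQ - c*TP)/(detM*lam)"
  have vd: "v1*d - v2*b = lam*N"
    using k1 k2 unfolding b_def d_def lam_def N_def by algebra
  have dM: "detM = al*lam*N" unfolding detM_def a_def c_def
    using vd by (simp add: algebra_simps)
  have dM0: "detM \<noteq> 0" using al0 lam0 N0 dM by simp
  define SP' where "SP' = 2*c20 P* v1*b + c11 P*(v1*d+v2*b) + 2*c02 P* v2*d"
  define SQ' where "SQ' = 2*c20 Q* v1*b + c11 Q*(v1*d+v2*b) + 2*c02 Q* v2*d"
  have keyN: "N*(v1*SQ' - v2*SP' - lam*K) = 0"
    using k1 k2 U0 H7 unfolding SP'_def SQ'_def b_def d_def lam_def N_def K_def P2v_def Q2v_def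
    by algebra
  have key': "v1*SQ' - v2*SP' = lam*K" using keyN N0 by simp
  have key: "a*SQ - c*SP = lam*detM"
  proof -
    have "SP = al*SP'" "SQ = al*SQ'" unfolding SP_def SP'_def SQ_def SQ'_def a_def c_def
      by (simp_all add: algebra_simps)
    then have "a*SQ - c*SP = al*al*(v1*SQ' - v2*SP')" unfolding a_def c_def by (simp add: algebra_simps)
    also have "\<dots> = al*al*lam*K" using key' by simp
    also have "\<dots> = lam*detM" using dM K0 by (simp add: al_def)
    finally show ?thesis .
  qed
  have cP1: "Px*a + Py*c = 0" "Qx*a + Qy*c = 0" using k1 k2 unfolding a_def c_def by algebra+
  have cP2: "Px*b + Py*d = lam*b" "Qx*b + Qy*d = lam*d"
    using det0 unfolding b_def d_def lam_def by algebra+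
  have NP: "N*P2v = K* v1" "N*Q2v = K* v2" using U0 unfolding N_def K_def by algebra+
  have cP3: "c20 P*a^2 + c11 P*a*c + c02 P*c^2 = lam*a" "c20 Q*a^2 + c11 Q*a*c + c02 Q*c^2 = lam*c"
  proof -
    have "c20 P*a^2 + c11 P*a*c + c02 P*c^2 = al*(al*P2v)" unfolding a_def c_def P2v_def
      by (simp add: power2_eq_square algebra_simps)
    also have "al*P2v = lam* v1" unfolding al_def using NP K0 by (simp add: field_simps)
    finally show "c20 P*a^2 + c11 P*a*c + c02 P*c^2 = lam*a" by (simp add: a_def algebra_simps)
    have "c20 Q*a^2 + c11 Q*a*c + c02 Q*c^2 = al*(al*Q2v)" unfolding a_def c_def Q2v_def
      by (simp add: power2_eq_square algebra_simps)
    also have "al*Q2v = lam* v2" unfolding al_def using NP K0 by (simp add: field_simps)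
    finally show "c20 Q*a^2 + c11 Q*a*c + c02 Q*c^2 = lam*c" by (simp add: c_def algebra_simps)
  qed
  have cP4a: "SP = lam*(2*h*a + b)"
    unfolding h_def using key dM0 lam0 unfolding detM_def
    by (simp add: field_simps; algebra)
  have cP4b: "SQ = lam*(2*h*c + d)"
    unfolding h_def using key dM0 lam0 unfolding detM_def
    by (simp add: field_simps; algebra)
  note cP4 = cP4a cP4b
  have cP5a: "TP = lam*(k*a + b*n)"
  proof -
    have "lam*(k*a+b*n) = (a*(d*TP - b*TQ) + b*(a*TQ - c*TP))/detM"
      unfolding k_def n_def using lam0 dM0 by (simp add: field_simps)
    also have "\<dots> = TP*detM/detM" by (simp add: detM_def algebra_simps)
    finally show ?thesis using dM0 by simp
  qed
  have cP5b: "TQ = lam*(k*c + d*n)"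
  proof -
    have "lam*(k*c+d*n) = (c*(d*TP - b*TQ) + d*(a*TQ - c*TP))/detM"
      unfolding k_def n_def using lam0 dM0 by (simp add: field_simps)
    also have "\<dots> = TQ*detM/detM" by (simp add: detM_def algebra_simps)
    finally show ?thesis using dM0 by simp
  qed
  note cP5 = cP5a cP5b
  show ?thesis
  proof (intro exI conjI allI)
    show "a*d - b*c \<noteq> 0" using dM0 by (simp add: detM_def)
    show "lam \<noteq> 0" by (rule lam0)
    fix w1 w2
    show "qev P (a * w1 + b * w2 + r1) (c * w1 + d * w2 + r2)
       = lam * (a * (w1^2 + 2 * h * w1 * w2 + k * w2^2) + b * (w2 + w1 * w2 + n * w2^2))"
      unfolding qev_expand P0 Px_def[symmetric] Py_def[symmetric] SP_def[symmetric] TP_def[symmetric]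
        cP1 cP2 cP3 cP4 cP5
      by (simp add: algebra_simps power2_eq_square)
    show "qev Q (a * w1 + b * w2 + r1) (c * w1 + d * w2 + r2)
       = lam * (c * (w1^2 + 2 * h * w1 * w2 + k * w2^2) + d * (w2 + w1 * w2 + n * w2^2))"
      unfolding qev_expand Q0 Qx_def[symmetric] Qy_def[symmetric] SQ_def[symmetric] TQ_def[symmetric]
        cP1 cP2 cP3 cP4 cP5
      by (simp add: algebra_simps power2_eq_square)
  qed
qed

end
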